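(* There is a function $\eta(X)\to0$ as $X\to\infty$ and an absolute constant $C$ such that the following holds. Let $h=h(X)$ satisfy $h(X)\to\infty$ as $X\to\infty$ and $h\le \exp\left(\sqrt{\left(\tfrac12-\eta(X)\right)\log X\,\log\log X}\right)$. Then for all sufficiently large $X$ and all $T$ with $X/h\le T\le X$, $$\frac{1}{hT}\int_{X^{1/2}}^{T}\Big|\sum_{\substack{X\le n\le 4X\\ p\mid n\,\Rightarrow\, p\le h}}\frac{\lambda(n)}{n^{\frac12+it}}\Big|^2\,\mathrm{d}t\le \frac{C}{h},$$ where the inner sum is over integers $n\in[X,4X]$ all of whose prime factors are at most $h$.
   Context: $\lambda$ denotes the Liouville function, i.e. the completely multiplicative function with $\lambda(p)=-1$ for every prime $p$. *)

theory Defs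
  imports "HOL-Analysis.Analysis" "HOL-Computational_Algebra.Primes"
begin

definition liouville :: "nat \<Rightarrow> int" where
  "liouville n = (-1) ^ size (prime_factorization n)"

definition smooth_range :: "real \<Rightarrow> real \<Rightarrow> nat set" where
  "smooth_range X h = {n::nat. X \<le> real n \<and> real n \<le> 4 * X \<and>
      (\<forall>p. prime p \<and> p dvd n \<longrightarrow> real p \<le> h)}"

definition smooth_dirichlet_poly :: "real \<Rightarrow> real \<Rightarrow> real \<Rightarrow> complex" where
  "smooth_dirichlet_poly X h t =
     (\<Sum>n\<in>smooth_range X h. of_int (liouville n) / (of_nat n) powr (1/2 + \<i> * of_real t))"

end

theory Submission
  imports Defs "HOL-Real_Asymp.Real_Asymp"
begin


lemma prod_primes_dvd:
  fixes A :: "nat set"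
  assumes "finite A" "\<forall>p\<in>A. prime p \<and> p dvd k"
  shows "\<Prod>A dvd k"
  using assms
proof (induction A rule: finite_induct)
  case empty then show ?case by simp
next
  case (insert p A)
  have cop: "coprime p (\<Prod>A)"
  proof (rule prime_imp_coprime)
    show "prime p" using insert by auto
    show "\<not> p dvd \<Prod>A"
    proof
      assume "p dvd \<Prod>A"
      then obtain q where "q \<in> A" "p dvd q"
        using insert by (auto simp: prime_dvd_prod_iff)
      then have "p = q" using insert by (auto simp: primes_dvd_imp_eq)
      then show False using \<open>q\<in>A\<close> insert by auto
    qed
  qed
  have "p * \<Prod>A dvd k"
    using cop insert by (intro divides_mult) auto
  then show ?case using insert by simp
qed

lemma binom_le: "(2*m+1) choose m \<le> 4^m"
proof -
  have "(2*m+1) choose m \<le> sum ((choose) (2 * m + 1)) {..m}"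
    by (rule member_le_sum) auto
  also have "\<dots> = 4^m" by (subst binomial_r_part_sum) (simp add: power_mult)
  finally show ?thesis .
qed

lemma mid_primes_dvd:
  "\<Prod>{p. prime p \<and> m+1 < p \<and> p \<le> 2*m+1} dvd ((2*m+1) choose m)"
proof (rule prod_primes_dvd)
  show "finite {p. prime p \<and> m+1 < p \<and> p \<le> 2*m+1}" by auto
  show "\<forall>p\<in>{p. prime p \<and> m+1 < p \<and> p \<le> 2*m+1}. prime p \<and> p dvd ((2*m+1) choose m)"
  proof safe
    fix p assume p: "prime p" "m+1 < p" "p \<le> 2*m+1"
    have eq: "fact m * fact (m+1) * ((2*m+1) choose m) = (fact (2*m+1) :: nat)"
      using binomial_fact_lemma[of m "2*m+1"] by (simp add: algebra_simps)
    have "p dvd (fact (2*m+1) :: nat)" using p prime_dvd_fact_iff by blast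
    then have "p dvd fact m * fact (m+1) * ((2*m+1) choose m)" by (simp only: eq)
    moreover have "\<not> p dvd (fact m :: nat)" using p prime_dvd_fact_iff by auto
    moreover have "\<not> p dvd (fact (m+1) :: nat)" using p prime_dvd_fact_iff[of p "m+1"] by auto
    ultimately show "p dvd ((2*m+1) choose m)" using p by (simp add: prime_dvd_mult_iff)
  qed
qed

lemma primorial_le: "\<Prod>{p::nat. prime p \<and> p \<le> n} \<le> 4^n"
proof (induction n rule: less_induct)
  case (less n)
  show ?case
  proof (cases "n \<le> 2")
    case True
    have sub: "{p::nat. prime p \<and> p \<le> n} \<subseteq> {2}"
    proof
      fix p assume "p \<in> {p::nat. prime p \<and> p \<le> n}"
      then have "prime p" "p \<le> 2" using True by auto
      then have "p = 2" using prime_ge_2_nat[of p] by linarith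
      then show "p \<in> {2}" by simp
    qed
    then have "{p::nat. prime p \<and> p \<le> n} = {} \<or> {p::nat. prime p \<and> p \<le> n} = {2}" by blast
    then show ?thesis
    proof
      assume e: "{p::nat. prime p \<and> p \<le> n} = {}" show ?thesis unfolding e by simp
    next
      assume e: "{p::nat. prime p \<and> p \<le> n} = {2}"
      then have "2 \<in> {p::nat. prime p \<and> p \<le> n}" by simp
      then have "n \<ge> 2" by simp
      then have "(4::nat)^2 \<le> 4^n" by (intro power_increasing) auto
      then show ?thesis unfolding e by simp
    qed
  next
    case False
    show ?thesis
    proof (cases "even n")
      case True
      then have np: "\<not> prime n" using False prime_odd_nat[of n] by auto
      have "{p::nat. prime p \<and> p \<le> n} = {p. prime p \<and> p \<le> n - 1}"
      proof (rule Collect_cong)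
        fix p
        show "(prime p \<and> p \<le> n) = (prime p \<and> p \<le> n - 1)"
        proof
          assume a: "prime p \<and> p \<le> n"
          then have "p \<noteq> n" using np by auto
          then show "prime p \<and> p \<le> n - 1" using a by linarith
        next
          assume "prime p \<and> p \<le> n - 1" then show "prime p \<and> p \<le> n" by linarith
        qed
      qed
      then have "\<Prod>{p::nat. prime p \<and> p \<le> n} \<le> 4^(n-1)" using less[of "n-1"] False by simp
      also have "\<dots> \<le> 4^n" by (intro power_increasing) auto
      finally show ?thesis .
    next
      case odd: False
      then obtain m where m: "n = 2*m+1" by (metis oddE)
      have split: "{p::nat. prime p \<and> p \<le> n} = {p. prime p \<and> p \<le> m+1} \<union> {p. prime p \<and> m+1 < p \<and> p \<le> 2*m+1}"
        using m by auto
      have "\<Prod>{p::nat. prime p \<and> p \<le> n} = \<Prod>{p. prime p \<and> p \<le> m+1} * \<Prod>{p. prime p \<and> m+1 < p \<and> p \<le> 2*m+1}"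
        unfolding split by (rule prod.union_disjoint) auto
      also have "\<dots> \<le> 4^(m+1) * 4^m"
      proof (rule mult_le_mono)
        show "\<Prod>{p. prime p \<and> p \<le> m+1} \<le> 4^(m+1)" using less[of "m+1"] m False by simp
        have "\<Prod>{p. prime p \<and> m+1 < p \<and> p \<le> 2*m+1} \<le> (2*m+1) choose m"
          by (rule dvd_imp_le[OF mid_primes_dvd]) (simp add: zero_less_binomial_iff)
        also have "\<dots> \<le> 4^m" by (rule binom_le)
        finally show "\<Prod>{p. prime p \<and> m+1 < p \<and> p \<le> 2*m+1} \<le> 4^m" .
      qed
      also have "(4::nat)^(m+1) * 4^m = 4^n" using m by (simp add: power_add[symmetric])
      finally show ?thesis .
    qed
  qed
qed



lemma block_card:
  assumes "j \<ge> 1"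
  shows "j * card {p::nat. prime p \<and> 2^j < p \<and> p \<le> 2^(j+1)} \<le> 2^(j+2)"
proof -
  define B where "B = {p::nat. prime p \<and> 2^j < p \<and> p \<le> 2^(j+1)}"
  have fin: "finite B" unfolding B_def by auto
  have "(2::nat)^(j * card B) = (2^j)^(card B)" by (rule power_mult)
  also have "\<dots> = (\<Prod>p\<in>B. (2::nat)^j)" by simp
  also have "\<dots> \<le> \<Prod>B" by (rule prod_mono) (auto simp: B_def)
  also have "\<Prod>B \<le> \<Prod>{p::nat. prime p \<and> p \<le> 2^(j+1)}"
  proof (rule dvd_imp_le)
    show "\<Prod>B dvd \<Prod>{p::nat. prime p \<and> p \<le> 2^(j+1)}"
      by (rule prod_dvd_prod_subset) (auto simp: B_def)
    show "0 < \<Prod>{p::nat. prime p \<and> p \<le> 2^(j+1)}"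
      by (rule prod_pos) (auto simp: prime_gt_0_nat)
  qed
  also have "\<dots> \<le> 4^(2^(j+1))" by (rule primorial_le)
  also have "(4::nat)^(2^(j+1)) = (2^2)^(2^(j+1))" by simp
  also have "\<dots> = 2^(2*2^(j+1))" by (rule power_mult[symmetric])
  also have "(2::nat)*2^(j+1) = 2^(j+2)" by simp
  finally have "(2::nat)^(j * card B) \<le> 2^(2^(j+2))" .
  then have "j * card B \<le> 2^(j+2)" using power_increasing_iff[of "2::nat"] by simp
  then show ?thesis unfolding B_def .
qed

lemma block_sum:
  assumes "j \<ge> 1" "0 \<le> \<delta>" "\<delta> \<le> 1"
  shows "(\<Sum>p\<in>{p::nat. prime p \<and> 2^j < p \<and> p \<le> 2^(j+1)}. real p powr (\<delta>-1))
         \<le> 8 * (2 powr \<delta>)^j / j"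
proof -
  define B where "B = {p::nat. prime p \<and> 2^j < p \<and> p \<le> 2^(j+1)}"
  have "(\<Sum>p\<in>B. real p powr (\<delta>-1)) \<le> (\<Sum>p\<in>B. (2 powr \<delta>)^(j+1) / 2^j)"
  proof (rule sum_mono)
    fix p assume "p \<in> B"
    then have p: "2^j < p" "p \<le> 2^(j+1)" by (auto simp: B_def)
    have pp: "real p > 0" using p by (auto intro: le_less_trans[OF _ p(1)])
    have "real p powr (\<delta>-1) = real p powr \<delta> / real p"
      using pp by (simp add: powr_diff)
    also have "\<dots> \<le> (2^(j+1)) powr \<delta> / 2^j"
    proof (rule frac_le)
      have "real p \<le> 2^(j+1)" using p(2) by (metis of_nat_le_iff of_nat_numeral of_nat_power)
      then show "real p powr \<delta> \<le> (2^(j+1)) powr \<delta>"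
        using pp assms by (intro powr_mono2) auto
      show "(2::real)^j \<le> real p" using p
        by (metis less_imp_le of_nat_le_iff of_nat_numeral of_nat_power)
    qed auto
    also have "((2::real)^(j+1)) powr \<delta> = (2 powr \<delta>)^(j+1)"
    proof -
      have "((2::real)^(j+1)) powr \<delta> = (2 powr real (j+1)) powr \<delta>"
        by (subst powr_realpow) auto
      also have "\<dots> = 2 powr (real (j+1) * \<delta>)" by (rule powr_powr)
      also have "\<dots> = (2 powr \<delta>) powr real (j+1)" by (simp add: powr_powr mult.commute)
      also have "\<dots> = (2 powr \<delta>)^(j+1)" by (rule powr_realpow) simp
      finally show ?thesis .
    qed
    finally show "real p powr (\<delta>-1) \<le> (2 powr \<delta>)^(j+1) / 2^j" .
  qed
  also have "\<dots> = card B * ((2 powr \<delta>)^(j+1) / 2^j)" by simp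
  also have "\<dots> \<le> (2^(j+2) / j) * ((2 powr \<delta>)^(j+1) / 2^j)"
  proof (rule mult_right_mono)
    have "real (j * card B) \<le> 2^(j+2)" using block_card[OF assms(1)] unfolding B_def
      by (metis of_nat_le_iff of_nat_numeral of_nat_power)
    then show "real (card B) \<le> 2^(j+2) / j" using assms(1) by (simp add: field_simps)
  qed auto
  also have "\<dots> = 4 * 2 powr \<delta> * (2 powr \<delta>)^j / j"
    by (simp add: field_simps power_add)
  also have "\<dots> \<le> 4 * 2 * (2 powr \<delta>)^j / j"
  proof -
    have "2 powr \<delta> \<le> 2 powr (1::real)" using assms by (intro powr_mono) auto
    then show ?thesis using assms by (intro divide_right_mono mult_right_mono mult_left_mono) auto
  qed
  finally show ?thesis unfolding B_def by simp
qed

lemma prefix_sum: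
  assumes "0 \<le> \<delta>" "\<delta> \<le> 1"
  shows "(\<Sum>p\<in>{p::nat. prime p \<and> p \<le> 2^(M+1)}. real p powr (\<delta>-1))
         \<le> 1 + 8 * (\<Sum>j=1..M. (2 powr \<delta>)^j / j)"
proof (induction M)
  case 0
  have "{p::nat. prime p \<and> p \<le> 2^(0+1)} \<subseteq> {2}"
  proof
    fix p assume "p \<in> {p::nat. prime p \<and> p \<le> 2^(0+1)}"
    then have "prime p" "p \<le> 2" by auto
    then have "p = 2" using prime_ge_2_nat[of p] by linarith
    then show "p \<in> {2}" by simp
  qed
  moreover have "prime (2::nat)" by simp
  ultimately have e: "{p::nat. prime p \<and> p \<le> 2^(0+1)} = {2}" by auto
  have "(2::real) powr (\<delta> - 1) \<le> 2 powr 0" using assms by (intro powr_mono) auto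
  then show ?case unfolding e by simp
next
  case (Suc M)
  define A where "A = {p::nat. prime p \<and> p \<le> 2^(M+1)}"
  define B where "B = {p::nat. prime p \<and> 2^(Suc M) < p \<and> p \<le> 2^(Suc M+1)}"
  have split: "{p::nat. prime p \<and> p \<le> 2^(Suc M+1)} = A \<union> B"
    unfolding A_def B_def by auto
  have "(\<Sum>p\<in>{p::nat. prime p \<and> p \<le> 2^(Suc M+1)}. real p powr (\<delta>-1)) =
     (\<Sum>p\<in>A. real p powr (\<delta>-1)) + (\<Sum>p\<in>B. real p powr (\<delta>-1))"
    unfolding split by (rule sum.union_disjoint) (auto simp: A_def B_def)
  also have "\<dots> \<le> (1 + 8 * (\<Sum>j=1..M. (2 powr \<delta>)^j / j)) + 8 * (2 powr \<delta>)^(Suc M) / (Suc M)"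
  proof (rule add_mono)
    show "(\<Sum>p\<in>A. real p powr (\<delta>-1)) \<le> 1 + 8 * (\<Sum>j=1..M. (2 powr \<delta>)^j / j)"
      using Suc.IH unfolding A_def .
    show "(\<Sum>p\<in>B. real p powr (\<delta>-1)) \<le> 8 * (2 powr \<delta>)^(Suc M) / (Suc M)"
      unfolding B_def by (rule block_sum) (use assms in auto)
  qed
  also have "(\<Sum>j=1..Suc M. (2 powr \<delta>)^j / j) = (\<Sum>j=1..M. (2 powr \<delta>)^j / j) + (2 powr \<delta>)^(Suc M) / (Suc M)"
    by (rule sum.cl_ivl_Suc[THEN trans]) simp
  then have "(1 + 8 * (\<Sum>j=1..M. (2 powr \<delta>)^j / j)) + 8 * (2 powr \<delta>)^(Suc M) / (Suc M)
      = 1 + 8 * (\<Sum>j=1..Suc M. (2 powr \<delta>)^j / j)" by (simp add: algebra_simps)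
  finally show ?case .
qed

lemma harm_le_ln: "n \<ge> 1 \<Longrightarrow> harm n \<le> 1 + ln (real n)"
proof (induction n rule: dec_induct)
  case base then show ?case by (simp add: harm_def)
next
  case (step n)
  have n: "real n \<ge> 1" using step by simp
  have "ln (real n / (real n + 1)) \<le> real n / (real n + 1) - 1"
    using n by (intro ln_le_minus_one) auto
  also have "\<dots> = - inverse (real n + 1)" using n by (simp add: field_simps)
  finally have "inverse (real n + 1) \<le> ln (real n + 1) - ln (real n)"
    using n by (simp add: ln_div)
  then show ?case using step by (simp add: harm_Suc add_ac)
qed

lemma geo_sum_le:
  fixes r :: real
  assumes "r > 1"
  shows "(\<Sum>j=1..M. r^j) \<le> r^(M+1) / (r - 1)"
proof -
  have "(r - 1) * (\<Sum>j=1..M. r^j) = r^(M+1) - r"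
    by (induction M) (simp_all add: sum.cl_ivl_Suc algebra_simps)
  then have "(\<Sum>j=1..M. r^j) = (r^(M+1) - r) / (r-1)" using assms by (simp add: field_simps)
  also have "\<dots> \<le> r^(M+1) / (r-1)" using assms by (intro divide_right_mono) auto
  finally show ?thesis .
qed

lemma geo_harm:
  fixes r :: real
  assumes "r > 1" "M \<ge> 1"
  shows "(\<Sum>j=1..M. r^j / j) \<le> 2 * r^(M+1) / (M * (r - 1)) + r powr (M/2) * (1 + ln M)"
proof -
  have "(\<Sum>j=1..M. r^j / j) \<le> (\<Sum>j=1..M. 2 / M * r^j + r powr (M/2) * (1/j))"
  proof (rule sum_mono)
    fix j assume j: "j \<in> {1..M}"
    show "r^j / j \<le> 2 / M * r^j + r powr (M/2) * (1/j)"
    proof (cases "2*j \<ge> M")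
      case True
      then have "1 / real j \<le> 2 / M" using j by (simp add: field_simps)
      then have "(1 / real j) * r^j \<le> 2 / M * r^j" using assms
        by (intro mult_right_mono) auto
      then have "r^j / j \<le> 2 / M * r^j" by simp
      moreover have "0 \<le> r powr (M/2) * (1/j)" by simp
      ultimately show ?thesis by linarith
    next
      case False
      have "r^j = r powr j" using assms by (simp add: powr_realpow)
      also have "\<dots> \<le> r powr (M/2)" using False assms by (intro powr_mono) auto
      finally have "r^j / j \<le> r powr (M/2) * (1/j)" using j by (simp add: divide_right_mono)
      moreover have "0 \<le> 2 / M * r^j" using assms by simp
      ultimately show ?thesis by linarith
    qed
  qed
  also have "\<dots> = 2 / M * (\<Sum>j=1..M. r^j) + r powr (M/2) * harm M"
    by (simp add: sum.distrib sum_distrib_left harm_def inverse_eq_divide)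
  also have "\<dots> \<le> 2 / M * (r^(M+1) / (r-1)) + r powr (M/2) * (1 + ln M)"
    using assms by (intro add_mono mult_left_mono geo_sum_le harm_le_ln) auto
  finally show ?thesis by simp
qed



lemma two_powr_mono: "a \<le> b \<Longrightarrow> (2::real) powr a \<le> 2 powr b"
  by (intro powr_mono) auto

lemma prime_sum_bound:
  fixes y \<delta> :: real
  assumes y: "y \<ge> 2" and d: "0 < \<delta>" "\<delta> \<le> 1"
  shows "(\<Sum>p\<in>{p::nat. prime p \<and> real p \<le> y}. real p powr (\<delta>-1))
     \<le> 1 + 8 * (8 * (y powr \<delta>) / ln (y powr \<delta>) + 2 * sqrt (y powr \<delta>) * (1 + ln (log 2 y + 1)))"
proof -
  define Lg where "Lg = log 2 y"
  define M where "M = nat \<lceil>Lg\<rceil>"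
  define r where "r = (2::real) powr \<delta>"
  define V where "V = y powr \<delta>"
  have Lg1: "Lg \<ge> 1" unfolding Lg_def using y by simp
  have M1: "real M \<ge> Lg" "real M \<le> Lg + 1" unfolding M_def using Lg1 by linarith+
  have Mge: "M \<ge> 1" using M1 Lg1 by linarith
  have yLg: "y = 2 powr Lg" unfolding Lg_def using y by simp
  have V2: "V = 2 powr (\<delta> * Lg)" unfolding V_def using yLg by (simp add: powr_powr mult.commute)
  have r1: "r > 1" unfolding r_def using d by (metis powr_less_mono powr_zero_eq_one one_less_numeral_iff semiring_norm(76) zero_neq_numeral)
  have rpow: "r^k = 2 powr (\<delta> * k)" for k :: nat
    unfolding r_def by (simp add: powr_realpow[symmetric] powr_powr)
  have sub: "{p::nat. prime p \<and> real p \<le> y} \<subseteq> {p::nat. prime p \<and> p \<le> 2^(M+1)}"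
  proof safe
    fix p :: nat assume "prime p" "real p \<le> y"
    have "y \<le> 2 powr real M" unfolding yLg using M1 by (intro two_powr_mono) auto
    also have "\<dots> = 2^M" by (simp add: powr_realpow)
    also have "\<dots> \<le> 2^(M+1)" by simp
    finally have "real p \<le> 2^(M+1)" using \<open>real p \<le> y\<close> by linarith
    then show "p \<le> 2^(M+1)" by (metis of_nat_le_iff of_nat_numeral of_nat_power)
  qed
  have "(\<Sum>p\<in>{p::nat. prime p \<and> real p \<le> y}. real p powr (\<delta>-1))
      \<le> (\<Sum>p\<in>{p::nat. prime p \<and> p \<le> 2^(M+1)}. real p powr (\<delta>-1))"
    by (rule sum_mono2[OF _ sub]) auto
  also have "\<dots> \<le> 1 + 8 * (\<Sum>j=1..M. (2 powr \<delta>)^j / j)"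
    using d by (intro prefix_sum) auto
  also have "(\<Sum>j=1..M. (2 powr \<delta>)^j / j) \<le> 2 * r^(M+1) / (M * (r - 1)) + r powr (M/2) * (1 + ln M)"
    unfolding r_def[symmetric] using r1 Mge by (rule geo_harm)
  also have "2 * r^(M+1) / (M * (r - 1)) \<le> 8 * V / ln V"
  proof -
    have "r^(M+1) = 2 powr (\<delta> * (M+1))" using rpow[of "M+1"] by (simp add: add_ac)
    also have "\<dots> \<le> 2 powr (2 + \<delta> * Lg)"
    proof (rule two_powr_mono)
      have "\<delta> * real M \<le> \<delta> * (1 + Lg)" using M1 d by (intro mult_left_mono) auto
      then show "\<delta> * real (M+1) \<le> 2 + \<delta> * Lg" using d by (simp add: algebra_simps)
    qed
    also have "\<dots> = 4 * V" unfolding V2 by (simp add: powr_add)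
    finally have num: "r^(M+1) \<le> 4 * V" .
    have "r - 1 \<ge> \<delta> * ln 2"
    proof -
      have "r = exp (\<delta> * ln 2)" unfolding r_def by (simp add: powr_def)
      then show ?thesis using exp_ge_add_one_self[of "\<delta> * ln 2"] by linarith
    qed
    then have "M * (r - 1) \<ge> Lg * (\<delta> * ln 2)"
      using M1 Lg1 d by (intro mult_mono) auto
    moreover have "ln V = \<delta> * Lg * ln 2" unfolding V2 by (simp add: ln_powr)
    ultimately have den: "M * (r - 1) \<ge> ln V" by (simp add: algebra_simps)
    have lnVpos: "ln V > 0" using \<open>ln V = \<delta> * Lg * ln 2\<close> d Lg1 by simp
    have "2 * r^(M+1) / (M * (r - 1)) \<le> 2 * (4 * V) / ln V"
      using num den lnVpos r1 by (intro frac_le) (auto simp: V_def)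
    then show ?thesis by simp
  qed
  also have "r powr (M/2) * (1 + ln M) \<le> (2 * sqrt V) * (1 + ln (log 2 y + 1))"
  proof (rule mult_mono)
    have "r powr (M/2) = 2 powr (\<delta> * (M/2))" unfolding r_def by (simp add: powr_powr)
    also have "\<dots> \<le> 2 powr (1 + \<delta> * Lg / 2)"
    proof (rule two_powr_mono)
      have "\<delta> * real M \<le> \<delta> * (1 + Lg)" using M1 d by (intro mult_left_mono) auto
      then show "\<delta> * (real M/2) \<le> 1 + \<delta> * Lg / 2" using d by (simp add: algebra_simps)
    qed
    also have "\<dots> = 2 * sqrt V"
      unfolding V2 by (simp add: powr_add powr_half_sqrt[symmetric] powr_powr)
    finally show "r powr (M/2) \<le> 2 * sqrt V" .
    have "ln (real M) \<le> ln (Lg + 1)" using M1 Mge by (subst ln_le_cancel_iff) auto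
    then show "1 + ln M \<le> 1 + ln (log 2 y + 1)" unfolding Lg_def by simp
    show "0 \<le> 2 * sqrt V" unfolding V_def by simp
    show "0 \<le> 1 + ln (real M)" using Mge by simp
  qed
  finally show ?thesis unfolding V_def by simp
qed



lemma smooth_range_sub: "smooth_range X h \<subseteq> {..nat \<lfloor>4*X\<rfloor>}"
  unfolding smooth_range_def by (auto simp: le_nat_floor)

lemma finite_smooth_range: "finite (smooth_range X h)"
  by (rule finite_subset[OF smooth_range_sub]) auto

lemma geom_exp_bound:
  fixes q :: real
  assumes "0 \<le> q" "q \<le> 3/4"
  shows "(\<Sum>k\<le>K. q^k) \<le> exp (4 * q)"
proof -
  have "(\<Sum>k\<le>K. q^k) = (\<Sum>k<Suc K. q^k)" by (simp add: lessThan_Suc_atMost)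
  also have "\<dots> = (1 - q^Suc K) / (1 - q)" using assms by (subst sum_gp_strict) auto
  also have "\<dots> \<le> 1 / (1 - q)" using assms by (intro divide_right_mono) auto
  also have "\<dots> \<le> exp (4 * q)"
  proof -
    have "ln (1 / (1 - q)) \<le> 1 / (1 - q) - 1" using assms by (intro ln_le_minus_one) auto
    also have "\<dots> = q / (1 - q)" using assms by (simp add: field_simps)
    also have "\<dots> \<le> q / (1/4)" using assms by (intro divide_left_mono) auto
    finally have "ln (1 / (1 - q)) \<le> 4 * q" by simp
    then have "exp (ln (1 / (1 - q))) \<le> exp (4 * q)" by simp
    then show ?thesis using assms by simp
  qed
  finally show ?thesis .
qed

lemma rankin:
  fixes X h y \<sigma> :: real
  assumes X: "X > 0" and hy: "h \<le> y" and s: "1/2 \<le> \<sigma>" "\<sigma> \<le> 1"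
  shows "real (card (smooth_range X h)) \<le>
     (4*X) powr \<sigma> * exp (4 * (\<Sum>p\<in>{p::nat. prime p \<and> real p \<le> y}. real p powr (-\<sigma>)))"
proof -
  define S where "S = smooth_range X h"
  define P where "P = {p::nat. prime p \<and> real p \<le> y}"
  define K where "K = nat \<lfloor>4*X\<rfloor>"
  define q where "q p = real p powr (-\<sigma>)" for p :: nat
  define g where "g n = restrict (\<lambda>p. multiplicity p n) P" for n :: nat
  have finS: "finite S" unfolding S_def by (rule finite_smooth_range)
  have finP: "finite P"
  proof (rule finite_subset[of _ "{..nat \<lfloor>y\<rfloor>}"])
    show "P \<subseteq> {..nat \<lfloor>y\<rfloor>}"
    proof
      fix p assume "p \<in> P"
      then have "real p \<le> y" unfolding P_def by simp
      then have "p \<le> nat \<lfloor>y\<rfloor>" by (rule le_nat_floor)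
      then show "p \<in> {..nat \<lfloor>y\<rfloor>}" by simp
    qed
  qed simp
  have Sprops: "X \<le> real n" "real n \<le> 4*X" "n > 0" "n \<le> K"
     "\<And>p. prime p \<Longrightarrow> p dvd n \<Longrightarrow> real p \<le> h" if "n \<in> S" for n
  proof -
    have a: "X \<le> real n \<and> real n \<le> 4*X \<and> (\<forall>p. prime p \<and> p dvd n \<longrightarrow> real p \<le> h)"
      using that unfolding S_def smooth_range_def by simp
    then show "X \<le> real n" "real n \<le> 4*X" by simp_all
    show "n > 0" using a X by simp
    show "n \<le> K" unfolding K_def using a by (intro le_nat_floor) simp
    show "\<And>p. prime p \<Longrightarrow> p dvd n \<Longrightarrow> real p \<le> h" using a by blast
  qed
  have fact_n: "n = (\<Prod>p\<in>P. p ^ multiplicity p n)" if "n \<in> S" for n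
  proof -
    have "n = (\<Prod>p\<in>prime_factors n. p ^ multiplicity p n)"
      using Sprops(3)[OF that] by (rule prime_factorization_nat)
    also have "\<dots> = (\<Prod>p\<in>P. p ^ multiplicity p n)"
    proof (rule prod.mono_neutral_left[OF finP])
      show "prime_factors n \<subseteq> P"
      proof
        fix p assume "p \<in> prime_factors n"
        then have "prime p" "p dvd n" by (auto simp: in_prime_factors_iff)
        then have "real p \<le> h" using Sprops(5)[OF that] by blast
        then show "p \<in> P" unfolding P_def using hy \<open>prime p\<close> by simp
      qed
      show "\<forall>i\<in>P - prime_factors n. i ^ multiplicity i n = 1"
      proof
        fix p assume "p \<in> P - prime_factors n"
        then have "prime p" "p \<notin> prime_factors n" unfolding P_def by auto
        then have "\<not> p dvd n" using Sprops(3)[OF that] by (simp add: in_prime_factors_iff)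
        then show "p ^ multiplicity p n = 1" by (simp add: not_dvd_imp_multiplicity_0)
      qed
    qed
    finally show ?thesis .
  qed
  have q_n: "real n powr (-\<sigma>) = (\<Prod>p\<in>P. q p ^ g n p)" if "n \<in> S" for n
  proof -
    have "real n = (\<Prod>p\<in>P. real p ^ multiplicity p n)"
      by (subst fact_n[OF that]) simp
    then have "real n powr (-\<sigma>) = (\<Prod>p\<in>P. (real p ^ multiplicity p n) powr (-\<sigma>))"
      by (simp add: prod_powr_distrib)
    also have "\<dots> = (\<Prod>p\<in>P. q p ^ g n p)"
    proof (rule prod.cong[OF refl])
      fix p assume p: "p \<in> P"
      then have pp: "real p > 0" unfolding P_def using prime_gt_0_nat by auto
      have "(real p ^ multiplicity p n) powr (-\<sigma>) = (real p powr real (multiplicity p n)) powr (-\<sigma>)"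
        using pp by (simp add: powr_realpow)
      also have "\<dots> = real p powr (real (multiplicity p n) * (-\<sigma>))" by (rule powr_powr)
      also have "\<dots> = (real p powr (-\<sigma>)) ^ multiplicity p n" using pp by (simp add: powr_power)
      finally show "(real p ^ multiplicity p n) powr (-\<sigma>) = q p ^ g n p"
        using p by (simp add: q_def g_def)
    qed
    finally show ?thesis .
  qed
  have inj: "inj_on g S"
  proof
    fix m n assume mn: "m \<in> S" "n \<in> S" "g m = g n"
    have "\<And>p. p \<in> P \<Longrightarrow> multiplicity p m = multiplicity p n"
      using mn(3) unfolding g_def by (metis restrict_apply')
    then have "(\<Prod>p\<in>P. p ^ multiplicity p m) = (\<Prod>p\<in>P. p ^ multiplicity p n)"
      by (intro prod.cong) auto
    then show "m = n" using fact_n mn by metis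
  qed
  have gS: "g ` S \<subseteq> PiE P (\<lambda>_. {..K})"
  proof
    fix f assume "f \<in> g ` S"
    then obtain n where n: "n \<in> S" "f = g n" by auto
    have "multiplicity p n \<le> K" if "p \<in> P" for p
    proof -
      have p2: "p \<ge> 2" using that unfolding P_def by (simp add: prime_ge_2_nat)
      have "multiplicity p n < 2 ^ multiplicity p n" by (rule less_exp)
      also have "\<dots> \<le> p ^ multiplicity p n" using p2 by (intro power_mono) auto
      also have "\<dots> \<le> n" using Sprops(3)[OF n(1)] by (intro dvd_imp_le multiplicity_dvd) auto
      also have "\<dots> \<le> K" using Sprops(4)[OF n(1)] .
      finally show ?thesis by simp
    qed
    then show "f \<in> PiE P (\<lambda>_. {..K})" unfolding n g_def by auto
  qed
  have qb: "0 \<le> q p \<and> q p \<le> 3/4" if "p \<in> P" for p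
  proof -
    have p2: "real p \<ge> 2" using that unfolding P_def by (simp add: prime_ge_2_nat)
    have "q p \<le> 2 powr (-\<sigma>)" unfolding q_def using p2 s by (intro powr_mono2') auto
    also have "\<dots> \<le> 2 powr (-1/2)" using s by (intro powr_mono) auto
    also have "\<dots> = 1 / sqrt 2" by (simp add: powr_minus_divide powr_half_sqrt)
    also have "\<dots> \<le> 3/4"
    proof -
      have "(4/3::real) \<le> sqrt 2" by (rule real_le_rsqrt) (simp add: power2_eq_square)
      then show "1 / sqrt 2 \<le> (3/4::real)" by (simp add: field_simps)
    qed
    finally show ?thesis unfolding q_def by simp
  qed
  have sumb: "(\<Sum>n\<in>S. real n powr (-\<sigma>)) \<le> exp (4 * (\<Sum>p\<in>P. q p))"
  proof -
    have "(\<Sum>n\<in>S. real n powr (-\<sigma>)) = (\<Sum>n\<in>S. (\<Prod>p\<in>P. q p ^ g n p))"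
      by (rule sum.cong[OF refl]) (rule q_n)
    also have "\<dots> = (\<Sum>f\<in>g ` S. (\<Prod>p\<in>P. q p ^ f p))"
      by (rule sum.reindex[OF inj, symmetric, unfolded comp_def])
    also have "\<dots> \<le> (\<Sum>f\<in>PiE P (\<lambda>_. {..K}). (\<Prod>p\<in>P. q p ^ f p))"
    proof (rule sum_mono2[OF _ gS])
      show "finite (PiE P (\<lambda>_. {..K}))" using finP by (simp add: finite_PiE)
      fix f show "0 \<le> (\<Prod>p\<in>P. q p ^ f p)" using qb by (intro prod_nonneg) auto
    qed
    also have "\<dots> = (\<Prod>p\<in>P. (\<Sum>k\<le>K. q p ^ k))"
      by (rule prod_sum_PiE[symmetric]) (use finP in auto)
    also have "\<dots> \<le> (\<Prod>p\<in>P. exp (4 * q p))"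
    proof (rule prod_mono)
      fix p assume "p \<in> P"
      then show "0 \<le> (\<Sum>k\<le>K. q p ^ k) \<and> (\<Sum>k\<le>K. q p ^ k) \<le> exp (4 * q p)"
        using qb[of p] by (auto intro!: sum_nonneg geom_exp_bound)
    qed
    also have "\<dots> = exp (4 * (\<Sum>p\<in>P. q p))"
      by (simp add: exp_sum[OF finP] sum_distrib_left)
    finally show ?thesis .
  qed
  have "real (card S) = (\<Sum>n\<in>S. 1)" by simp
  also have "\<dots> \<le> (\<Sum>n\<in>S. (4*X) powr \<sigma> * real n powr (-\<sigma>))"
  proof (rule sum_mono)
    fix n assume n: "n \<in> S"
    have npos: "real n > 0" using Sprops(3)[OF n] by simp
    have "1 \<le> (4*X / real n) powr \<sigma>"
      using Sprops(2)[OF n] npos s by (intro ge_one_powr_ge_zero) (auto simp: field_simps)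
    also have "\<dots> = (4*X) powr \<sigma> * real n powr (-\<sigma>)"
      using npos X by (simp add: powr_divide powr_minus_divide)
    finally show "1 \<le> (4*X) powr \<sigma> * real n powr (-\<sigma>)" .
  qed
  also have "\<dots> = (4*X) powr \<sigma> * (\<Sum>n\<in>S. real n powr (-\<sigma>))" by (simp add: sum_distrib_left)
  also have "\<dots> \<le> (4*X) powr \<sigma> * exp (4 * (\<Sum>p\<in>P. q p))"
    by (rule mult_left_mono[OF sumb]) simp
  finally show ?thesis unfolding S_def P_def q_def .
qed



lemma term_eq:
  fixes n :: nat and t :: real and l :: int
  assumes "n > 0"
  shows "of_int l / (of_nat n) powr (1/2 + \<i> * of_real t) =
         complex_of_real (l * exp (- ln n / 2)) * cis (- (t * ln n))"
proof -
  have "(of_nat n :: complex) powr (1/2 + \<i> * of_real t) = exp ((1/2 + \<i> * of_real t) * of_real (ln n))"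
    using assms by (simp add: powr_def Ln_of_nat)
  also have "(1/2 + \<i> * of_real t) * of_real (ln n) = complex_of_real (ln n / 2) + \<i> * of_real (t * ln n)"
    by (simp add: algebra_simps)
  also have "exp \<dots> = complex_of_real (exp (ln n / 2)) * cis (t * ln n)"
    by (simp add: exp_add cis_conv_exp flip: exp_of_real)
  finally have d: "(of_nat n :: complex) powr (1/2 + \<i> * of_real t) = complex_of_real (exp (ln n / 2)) * cis (t * ln n)" .
  have e: "exp (- ln (real n) / 2) = inverse (exp (ln (real n) / 2))"
    by (simp add: exp_minus[symmetric])
  have "of_int l / (complex_of_real (exp (ln n / 2)) * cis (t * ln n)) =
        of_int l * (inverse (complex_of_real (exp (ln n / 2))) * inverse (cis (t * ln n)))"
    by (simp only: divide_inverse inverse_mult_distrib)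
  also have "\<dots> = complex_of_real (l * exp (- ln n / 2)) * cis (- (t * ln n))"
    unfolding e by (simp add: cis_inverse of_real_inverse)
  finally have "of_int l / (complex_of_real (exp (ln n / 2)) * cis (t * ln n)) =
        complex_of_real (l * exp (- ln n / 2)) * cis (- (t * ln n))" .
  then show ?thesis by (simp add: d)
qed

definition bcoef :: "nat \<Rightarrow> real" where
  "bcoef n = real_of_int (liouville n) * exp (- ln (real n) / 2)"

lemma sdp_eq:
  assumes "X > 0"
  shows "smooth_dirichlet_poly X h t =
     (\<Sum>n\<in>smooth_range X h. complex_of_real (bcoef n) * cis (- (t * ln n)))"
  unfolding smooth_dirichlet_poly_def
proof (rule sum.cong[OF refl])
  fix n assume "n \<in> smooth_range X h"
  then have "real n \<ge> X" unfolding smooth_range_def by simp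
  then have "n > 0" using assms by (cases n) auto
  then show "of_int (liouville n) / (of_nat n) powr (1/2 + \<i> * of_real t) =
     complex_of_real (bcoef n) * cis (- (t * ln n))"
    unfolding bcoef_def by (rule term_eq)
qed

lemma square_sum: "(\<Sum>m\<in>S. f m)^2 = (\<Sum>m\<in>S. \<Sum>n\<in>S. f m * (f n :: real))"
  by (simp add: power2_eq_square sum_product)

lemma sq_expand:
  assumes "X > 0"
  shows "(cmod (smooth_dirichlet_poly X h t))^2 =
     (\<Sum>m\<in>smooth_range X h. \<Sum>n\<in>smooth_range X h. bcoef m * bcoef n * cos (t * (ln m - ln n)))"
proof -
  define S where "S = smooth_range X h"
  have "Re (smooth_dirichlet_poly X h t) = (\<Sum>n\<in>S. bcoef n * cos (t * ln n))"
    unfolding sdp_eq[OF assms] S_def by (simp add: Re_sum)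
  moreover have "Im (smooth_dirichlet_poly X h t) = - (\<Sum>n\<in>S. bcoef n * sin (t * ln n))"
    unfolding sdp_eq[OF assms] S_def by (simp add: Im_sum sum_negf)
  ultimately have "(cmod (smooth_dirichlet_poly X h t))^2 =
      (\<Sum>n\<in>S. bcoef n * cos (t * ln n))^2 + (\<Sum>n\<in>S. bcoef n * sin (t * ln n))^2"
    by (simp add: cmod_power2)
  also have "\<dots> = (\<Sum>m\<in>S. \<Sum>n\<in>S. bcoef m * cos (t * ln m) * (bcoef n * cos (t * ln n))) +
      (\<Sum>m\<in>S. \<Sum>n\<in>S. bcoef m * sin (t * ln m) * (bcoef n * sin (t * ln n)))"
    by (simp only: square_sum)
  also have "\<dots> = (\<Sum>m\<in>S. \<Sum>n\<in>S. bcoef m * bcoef n * cos (t * (ln m - ln n)))"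
    by (simp add: sum.distrib[symmetric] right_diff_distrib cos_diff algebra_simps)
  finally show ?thesis unfolding S_def .
qed



definition Gf :: "real \<Rightarrow> real \<Rightarrow> real" where
  "Gf w t = (if w = 0 then t else sin (t * w) / w)"

lemma Gf_deriv: "((Gf w) has_real_derivative cos (t * w)) (at t)"
proof (cases "w = 0")
  assume w0: "w = 0"
  then have e: "Gf w = (\<lambda>t. t)" by (auto simp: Gf_def)
  have "((\<lambda>t. t) has_real_derivative 1) (at t)" by (rule DERIV_ident)
  moreover have "cos (t * w) = 1" using w0 by simp
  ultimately show ?thesis unfolding e by simp
next
  assume w0: "w \<noteq> 0"
  then have e: "Gf w = (\<lambda>t. sin (t * w) / w)" by (auto simp: Gf_def)
  have "((\<lambda>t. sin (t * w) / w) has_real_derivative cos (t * w) * (1 * w) / w) (at t)"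
    using w0 by (intro derivative_eq_intros) auto
  then show ?thesis using w0 unfolding e by simp
qed

lemma Gf_int:
  assumes "A \<le> B"
  shows "((\<lambda>t. c * cos (t * w)) has_integral c * (Gf w B - Gf w A)) {A..B}"
proof -
  have "((\<lambda>t. c * cos (t * w)) has_integral (c * Gf w B - c * Gf w A)) {A..B}"
  proof (rule fundamental_theorem_of_calculus[OF assms])
    fix t assume "t \<in> {A..B}"
    have "((\<lambda>t. c * Gf w t) has_real_derivative c * cos (t * w)) (at t)"
      by (intro DERIV_cmult Gf_deriv)
    then show "((\<lambda>t. c * Gf w t) has_vector_derivative c * cos (t * w)) (at t within {A..B})"
      by (simp add: has_real_derivative_iff_has_vector_derivative has_vector_derivative_at_within)
  qed
  then show ?thesis by (simp add: right_diff_distrib)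
qed

lemma Gf_bound: "w \<noteq> 0 \<Longrightarrow> \<bar>Gf w B - Gf w A\<bar> \<le> 2 / \<bar>w\<bar>"
proof -
  assume w: "w \<noteq> 0"
  have "\<bar>Gf w B - Gf w A\<bar> = \<bar>sin (B * w) - sin (A * w)\<bar> / \<bar>w\<bar>"
    using w by (simp add: Gf_def diff_divide_distrib[symmetric] abs_divide)
  also have "\<dots> \<le> 2 / \<bar>w\<bar>"
  proof (rule divide_right_mono)
    have "\<bar>sin (B * w)\<bar> \<le> 1" "\<bar>sin (A * w)\<bar> \<le> 1" by (rule abs_sin_le_one)+
    then show "\<bar>sin (B * w) - sin (A * w)\<bar> \<le> 2" by linarith
  qed simp
  finally show ?thesis .
qed

lemma ln_diff_lower:
  fixes m n :: real
  assumes "0 < n" "n < m"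
  shows "ln m - ln n \<ge> (m - n) / m"
proof -
  have "ln (n / m) \<le> n / m - 1" using assms by (intro ln_le_minus_one) auto
  then show ?thesis using assms by (simp add: ln_div field_simps)
qed

lemma harm_reindex:
  fixes A :: "nat set" and \<phi> :: "nat \<Rightarrow> nat"
  assumes "finite A" "inj_on \<phi> A" "\<phi> ` A \<subseteq> {1..K}"
  shows "(\<Sum>a\<in>A. 1 / real (\<phi> a)) \<le> harm K"
proof -
  have "(\<Sum>a\<in>A. 1 / real (\<phi> a)) = (\<Sum>d\<in>\<phi> ` A. 1 / real d)"
    by (rule sum.reindex[OF assms(2), symmetric, unfolded comp_def])
  also have "\<dots> \<le> (\<Sum>d\<in>{1..K}. 1 / real d)"
    by (rule sum_mono2[OF _ assms(3)]) auto
  also have "\<dots> = harm K" by (simp add: harm_def inverse_eq_divide)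
  finally show ?thesis .
qed

lemma dist_sum:
  fixes S :: "nat set"
  assumes "finite S" "S \<subseteq> {..K}" "m \<in> S"
  shows "(\<Sum>n\<in>S - {m}. 1 / \<bar>real m - real n\<bar>) \<le> 2 * harm K"
proof -
  define A1 where "A1 = {n\<in>S. n < m}"
  define A2 where "A2 = {n\<in>S. m < n}"
  have split: "S - {m} = A1 \<union> A2" unfolding A1_def A2_def by auto
  have fin: "finite A1" "finite A2" using assms(1) unfolding A1_def A2_def by auto
  have "(\<Sum>n\<in>S - {m}. 1 / \<bar>real m - real n\<bar>) =
      (\<Sum>n\<in>A1. 1 / \<bar>real m - real n\<bar>) + (\<Sum>n\<in>A2. 1 / \<bar>real m - real n\<bar>)"
    unfolding split by (rule sum.union_disjoint) (use fin in \<open>auto simp: A1_def A2_def\<close>)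
  also have "(\<Sum>n\<in>A1. 1 / \<bar>real m - real n\<bar>) = (\<Sum>n\<in>A1. 1 / real (m - n))"
    by (rule sum.cong) (auto simp: A1_def of_nat_diff)
  also have "(\<Sum>n\<in>A2. 1 / \<bar>real m - real n\<bar>) = (\<Sum>n\<in>A2. 1 / real (n - m))"
    by (rule sum.cong) (auto simp: A2_def of_nat_diff)
  also have "(\<Sum>n\<in>A1. 1 / real (m - n)) \<le> harm K"
  proof (rule harm_reindex[OF fin(1)])
    show "inj_on (\<lambda>n. m - n) A1" by (rule inj_onI) (auto simp: A1_def)
    have "m \<le> K" using assms(2,3) by auto
    then show "(\<lambda>n. m - n) ` A1 \<subseteq> {1..K}" by (auto simp: A1_def)
  qed
  also have "(\<Sum>n\<in>A2. 1 / real (n - m)) \<le> harm K"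
  proof (rule harm_reindex[OF fin(2)])
    show "inj_on (\<lambda>n. n - m) A2" by (rule inj_onI) (auto simp: A2_def)
    show "(\<lambda>n. n - m) ` A2 \<subseteq> {1..K}" using assms(2) by (force simp: A2_def)
  qed
  finally show ?thesis by simp
qed

lemma abs_liouville: "\<bar>real_of_int (liouville n)\<bar> = 1"
  unfolding liouville_def by (simp add: power_abs)

lemma bcoef_abs: "\<bar>bcoef n\<bar> = exp (- ln (real n) / 2)"
  unfolding bcoef_def by (simp add: abs_mult abs_liouville)

lemma bcoef_sq: "n > 0 \<Longrightarrow> bcoef n * bcoef n = 1 / real n"
proof -
  assume n: "n > 0"
  have "bcoef n * bcoef n = \<bar>bcoef n\<bar> * \<bar>bcoef n\<bar>" by (simp add: abs_mult_self_eq)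
  also have "\<dots> = exp (- ln (real n))" by (simp add: bcoef_abs flip: exp_add)
  also have "\<dots> = 1 / real n" using n by (simp add: exp_minus inverse_eq_divide)
  finally show ?thesis .
qed

lemma ln_gap:
  fixes X :: real and m n :: nat
  assumes "X > 0" "X \<le> real m" "real m \<le> 4*X" "X \<le> real n" "real n \<le> 4*X" "m \<noteq> n"
  shows "\<bar>ln (real m) - ln (real n)\<bar> \<ge> \<bar>real m - real n\<bar> / (4*X)"
proof (cases "n < m")
  case True
  have "ln (real m) - ln (real n) \<ge> (real m - real n) / real m"
    using assms True by (intro ln_diff_lower) auto
  moreover have "(real m - real n) / real m \<ge> (real m - real n) / (4*X)"
    using assms True by (intro divide_left_mono) auto
  ultimately show ?thesis using True by simp
next
  case False
  then have nm: "m < n" using assms by simp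
  have "ln (real n) - ln (real m) \<ge> (real n - real m) / real n"
    using assms nm by (intro ln_diff_lower) auto
  moreover have "(real n - real m) / real n \<ge> (real n - real m) / (4*X)"
    using assms nm by (intro divide_left_mono) auto
  ultimately show ?thesis using nm by simp
qed

lemma pair_bound:
  fixes X :: real and m n :: nat
  assumes X: "X \<ge> 1" and mn: "X \<le> real m" "real m \<le> 4*X" "X \<le> real n" "real n \<le> 4*X" "m \<noteq> n"
  shows "bcoef m * bcoef n * (Gf (ln m - ln n) B - Gf (ln m - ln n) A) \<le> 8 / \<bar>real m - real n\<bar>"
proof -
  define w where "w = ln (real m) - ln (real n)"
  have d: "\<bar>real m - real n\<bar> > 0" using mn by simp
  have wpos: "\<bar>w\<bar> \<ge> \<bar>real m - real n\<bar> / (4*X)" unfolding w_def using X mn by (intro ln_gap) auto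
  moreover have pos: "\<bar>real m - real n\<bar> / (4*X) > 0" using d X by simp
  ultimately have w0: "w \<noteq> 0" by auto
  have bb: "\<bar>bcoef m * bcoef n\<bar> \<le> 1 / X"
  proof -
    have "\<bar>bcoef m * bcoef n\<bar> = exp (- ln (real m) / 2 + - ln (real n) / 2)"
      by (simp add: abs_mult bcoef_abs flip: exp_add)
    also have "\<dots> \<le> exp (- ln X)"
    proof -
      have "ln X \<le> ln (real m)" "ln X \<le> ln (real n)" using X mn by auto
      then show ?thesis by simp
    qed
    also have "\<dots> = 1 / X" using X by (simp add: exp_minus inverse_eq_divide)
    finally show ?thesis .
  qed
  have "bcoef m * bcoef n * (Gf w B - Gf w A) \<le> \<bar>bcoef m * bcoef n\<bar> * \<bar>Gf w B - Gf w A\<bar>"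
    by (metis abs_ge_self abs_mult)
  also have "\<dots> \<le> (1 / X) * (2 / \<bar>w\<bar>)"
    using X by (intro mult_mono bb Gf_bound w0) auto
  also have "(1 / X) * (2 / \<bar>w\<bar>) \<le> (1 / X) * (2 / (\<bar>real m - real n\<bar> / (4*X)))"
  proof (rule mult_left_mono)
    show "2 / \<bar>w\<bar> \<le> 2 / (\<bar>real m - real n\<bar> / (4*X))"
    proof (rule divide_left_mono)
      show "0 < \<bar>w\<bar> * (\<bar>real m - real n\<bar> / (4*X))" using pos w0 by (intro mult_pos_pos) auto
    qed (use wpos in auto)
  qed (use X in auto)
  also have "(1 / X) * (2 / (\<bar>real m - real n\<bar> / (4*X))) = 8 / \<bar>real m - real n\<bar>"
    using X by (simp add: field_simps)
  finally show ?thesis unfolding w_def by simp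
qed

lemma mv_bound:
  fixes X h A B :: real
  assumes X: "X \<ge> 1" and AB: "A \<le> B"
  shows "integral {A..B} (\<lambda>t. (cmod (smooth_dirichlet_poly X h t))^2)
    \<le> real (card (smooth_range X h)) * ((B - A) / X + 16 * (1 + ln (4*X)))"
proof -
  define S where "S = smooth_range X h"
  define K where "K = nat \<lfloor>4*X\<rfloor>"
  define I where "I m n = bcoef m * bcoef n * (Gf (ln (real m) - ln (real n)) B - Gf (ln (real m) - ln (real n)) A)" for m n :: nat
  have finS: "finite S" unfolding S_def by (rule finite_smooth_range)
  have SK: "S \<subseteq> {..K}" unfolding S_def K_def by (rule smooth_range_sub)
  have Sp: "X \<le> real n" "real n \<le> 4*X" if "n \<in> S" for n
    using that unfolding S_def smooth_range_def by auto
  have eqf: "(\<lambda>t. (cmod (smooth_dirichlet_poly X h t))^2) =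
      (\<lambda>t. \<Sum>m\<in>S. \<Sum>n\<in>S. bcoef m * bcoef n * cos (t * (ln (real m) - ln (real n))))"
    using X by (intro ext) (simp add: sq_expand S_def)
  have hi: "((\<lambda>t. (cmod (smooth_dirichlet_poly X h t))^2) has_integral (\<Sum>m\<in>S. \<Sum>n\<in>S. I m n)) {A..B}"
    unfolding eqf I_def
    by (intro has_integral_sum finS ballI Gf_int AB)
  then have ieq: "integral {A..B} (\<lambda>t. (cmod (smooth_dirichlet_poly X h t))^2) = (\<Sum>m\<in>S. \<Sum>n\<in>S. I m n)"
    by (rule integral_unique)
  have K1: "K \<ge> 1" unfolding K_def using X by linarith
  have Kle: "real K \<le> 4*X" unfolding K_def using X by linarith
  have harmK: "harm K \<le> 1 + ln (4*X)"
  proof -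
    have "harm K \<le> 1 + ln (real K)" using K1 by (rule harm_le_ln)
    also have "ln (real K) \<le> ln (4*X)" using K1 Kle by (subst ln_le_cancel_iff) auto
    finally show ?thesis by simp
  qed
  have rowb: "(\<Sum>n\<in>S. I m n) \<le> (B - A) / X + 16 * (1 + ln (4*X))" if m: "m \<in> S" for m
  proof -
    have mpos: "m > 0" using Sp[OF m] X by (cases m) auto
    have "(\<Sum>n\<in>S. I m n) = I m m + (\<Sum>n\<in>S - {m}. I m n)"
      using finS m by (rule sum.remove)
    also have "I m m \<le> (B - A) / X"
    proof -
      have "I m m = (B - A) / real m" unfolding I_def using mpos by (simp add: bcoef_sq Gf_def)
      also have "\<dots> \<le> (B - A) / X" using AB X Sp[OF m] by (intro divide_left_mono) auto
      finally show ?thesis .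
    qed
    also have "(\<Sum>n\<in>S - {m}. I m n) \<le> (\<Sum>n\<in>S - {m}. 8 / \<bar>real m - real n\<bar>)"
    proof (rule sum_mono)
      fix n assume n: "n \<in> S - {m}"
      show "I m n \<le> 8 / \<bar>real m - real n\<bar>" unfolding I_def
        using X Sp[OF m] Sp[of n] n by (intro pair_bound) auto
    qed
    also have "\<dots> = 8 * (\<Sum>n\<in>S - {m}. 1 / \<bar>real m - real n\<bar>)" by (simp add: sum_distrib_left)
    also have "\<dots> \<le> 8 * (2 * harm K)" using dist_sum[OF finS SK m] by simp
    also have "\<dots> \<le> 16 * (1 + ln (4*X))" using harmK by simp
    finally show ?thesis by simp
  qed
  have "(\<Sum>m\<in>S. \<Sum>n\<in>S. I m n) \<le> real (card S) * ((B - A) / X + 16 * (1 + ln (4*X)))"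
    using rowb by (rule sum_bounded_above)
  then show ?thesis unfolding ieq S_def .
qed



lemma key_ineq:
  fixes X h L l e s H \<delta> :: real
  assumes Xpos: "X > 0" and L: "L = ln X" and L1: "L > 1" and l: "l = ln L" and lpos: "l > 0"
    and e: "0 < e" "e < 1" and s: "s = sqrt (L * l / 2)" and H: "H = (1 - e) * s" "H \<ge> 1"
    and d: "\<delta> = l / (2 * H)" "\<delta> \<le> 1/2"
    and h: "2 \<le> h" "h \<le> exp H"
    and asy: "10 + 4 * (1 + 8 * (8 * sqrt L / (l/2) + 2 * sqrt (sqrt L) * (1 + ln (H / ln 2 + 1))))
              + ln (3 + L) \<le> 2 * e * s"
  shows "real (card (smooth_range X h)) * (1 + 16 * h * (1 + ln (4*X))) \<le> X"
proof -
  have lnX: "ln X = L" using L by simp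
  have dpos: "\<delta> > 0" using d lpos H by simp
  define y where "y = exp H"
  define \<sigma> where "\<sigma> = 1 - \<delta>"
  define E0 where "E0 = 1 + 8 * (8 * sqrt L / (l/2) + 2 * sqrt (sqrt L) * (1 + ln (H / ln 2 + 1)))"
  have y2: "y \<ge> 2"
  proof -
    have "exp 1 \<le> exp H" using H by simp
    moreover have "(2::real) \<le> exp 1" using exp_ge_add_one_self[of 1] by simp
    ultimately show ?thesis unfolding y_def by linarith
  qed
  have N: "real (card (smooth_range X h)) \<le> (4*X) powr \<sigma> *
      exp (4 * (\<Sum>p\<in>{p::nat. prime p \<and> real p \<le> y}. real p powr (-\<sigma>)))"
    using Xpos h d dpos by (intro rankin) (auto simp: y_def \<sigma>_def)
  have PS: "(\<Sum>p\<in>{p::nat. prime p \<and> real p \<le> y}. real p powr (-\<sigma>)) \<le> E0"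
  proof -
    have "(\<Sum>p\<in>{p::nat. prime p \<and> real p \<le> y}. real p powr (-\<sigma>)) =
          (\<Sum>p\<in>{p::nat. prime p \<and> real p \<le> y}. real p powr (\<delta> - 1))"
      by (simp add: \<sigma>_def)
    also have "\<dots> \<le> 1 + 8 * (8 * (y powr \<delta>) / ln (y powr \<delta>) + 2 * sqrt (y powr \<delta>) * (1 + ln (log 2 y + 1)))"
      using y2 dpos d by (intro prime_sum_bound) auto
    also have "y powr \<delta> = sqrt L"
    proof -
      have "y powr \<delta> = exp (\<delta> * H)" unfolding y_def by (simp add: powr_def)
      also have "\<delta> * H = ln L / 2"
      proof -
        have "H > 0" using H by simp
        then show ?thesis using d(1) l by (simp add: field_simps)
      qed
      also have "exp (ln L / 2) = sqrt L" using L1 by (simp add: powr_half_sqrt[symmetric] powr_def)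
      finally show ?thesis .
    qed
    also have "log 2 y = H / ln 2" unfolding y_def by (simp add: log_def)
    also have "ln (sqrt L) = l / 2" using L1 l by (simp add: ln_sqrt)
    finally show ?thesis unfolding E0_def .
  qed
  have lnpos: "1 + ln (4*X) > 0"
  proof -
    have "ln (4*X) = ln 4 + L" using Xpos L by (simp add: ln_mult)
    moreover have "ln (4::real) \<ge> 0" by simp
    ultimately show ?thesis using L1 by linarith
  qed
  have hy: "1 + 16 * h * (1 + ln (4*X)) \<le> 17 * y * (1 + ln (4*X))"
  proof -
    have "h \<le> y" using h unfolding y_def by simp
    then have "16 * h * (1 + ln (4*X)) \<le> 16 * y * (1 + ln (4*X))" using lnpos by simp
    moreover have "1 \<le> y * (1 + ln (4*X))"
    proof -
      have "ln (4*X) = ln 4 + L" using Xpos L by (simp add: ln_mult)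
      moreover have "ln (4::real) \<ge> 0" by simp
      ultimately have t1: "1 + ln (4*X) \<ge> 1" using L1 by linarith
      have "1 * 1 \<le> y * (1 + ln (4*X))" by (rule mult_mono) (use y2 t1 in auto)
      then show ?thesis by simp
    qed
    ultimately show ?thesis by linarith
  qed
  have "real (card (smooth_range X h)) * (1 + 16 * h * (1 + ln (4*X)))
     \<le> ((4*X) powr \<sigma> * exp (4 * E0)) * (17 * y * (1 + ln (4*X)))"
  proof (rule mult_mono)
    show "real (card (smooth_range X h)) \<le> (4*X) powr \<sigma> * exp (4 * E0)"
    proof (rule order.trans[OF N])
      show "(4*X) powr \<sigma> * exp (4 * (\<Sum>p\<in>{p::nat. prime p \<and> real p \<le> y}. real p powr (-\<sigma>)))
          \<le> (4*X) powr \<sigma> * exp (4 * E0)"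
        using PS by (intro mult_left_mono) auto
    qed
  qed (use hy lnpos h in auto)
  also have "\<dots> = exp (\<sigma> * ln (4*X) + 4 * E0 + ln 17 + H + ln (1 + ln (4*X)))"
    using Xpos lnpos by (simp add: powr_def exp_add y_def)
  also have "\<dots> \<le> exp L"
  proof (subst exp_le_cancel_iff)
    have l4: "ln (4*X) = ln 4 + L" using Xpos L by (simp add: ln_mult)
    have s2: "s * s = L * l / 2" unfolding s using L1 lpos by simp
    have spos: "s > 0" unfolding s using L1 lpos by simp
    have dL: "\<delta> * L = s / (1 - e)"
    proof -
      have Ll: "L * l = 2 * (s * s)" using s2 by simp
      have "\<delta> * L = (L * l) / (2 * ((1 - e) * s))" using d H by simp
      also have "\<dots> = 2 * (s * s) / (2 * ((1 - e) * s))" unfolding Ll ..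
      also have "\<dots> = s / (1 - e)" using spos e by (simp add: field_simps)
      finally show ?thesis .
    qed
    have "s / (1 - e) \<ge> s * (1 + e)"
    proof -
      have "(1 + e) * (1 - e) \<le> 1" using e by (simp add: algebra_simps)
      then have "s * ((1 + e) * (1 - e)) \<le> s * 1" using spos by (intro mult_left_mono) auto
      then have "s * (1 + e) * (1 - e) \<le> s" by (simp add: mult.assoc)
      then show ?thesis using e by (simp add: field_simps)
    qed
    then have dL2: "\<delta> * L \<ge> s * (1 + e)" using dL by simp
    have sig: "\<sigma> * ln (4*X) \<le> ln 4 + L - \<delta> * L"
      unfolding l4 \<sigma>_def using dpos by (simp add: algebra_simps)
    have "ln 4 + ln 17 \<le> (10::real)"
    proof -
      have "ln (17::real) \<le> ln (2^5)" by simp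
      also have "\<dots> = 5 * ln 2" using ln_realpow[of "2::real" 5] by simp
      also have "ln (2::real) \<le> 2 - 1" by (rule ln_le_minus_one) simp
      finally have a: "ln (17::real) \<le> 5" by simp
      have "ln (4::real) \<le> ln (2^2)" by simp
      also have "\<dots> = 2 * ln 2" using ln_realpow[of "2::real" 2] by simp
      also have "ln (2::real) \<le> 2 - 1" by (rule ln_le_minus_one) simp
      finally have b: "ln (4::real) \<le> 2" by simp
      from a b show ?thesis by simp
    qed
    have ln4: "ln (4::real) \<le> 2"
    proof -
      have "ln (4::real) = ln (2^2)" by simp
      also have "\<dots> = 2 * ln 2" using ln_realpow[of "2::real" 2] by simp
      also have "ln (2::real) \<le> 2 - 1" by (rule ln_le_minus_one) simp
      finally show ?thesis by simp
    qed
    have l3: "ln (1 + ln (4*X)) \<le> ln (3 + L)"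
    proof (subst ln_le_cancel_iff)
      show "0 < 1 + ln (4*X)" by (rule lnpos)
      show "0 < 3 + L" using L1 by simp
      show "1 + ln (4*X) \<le> 3 + L" using l4 ln4 by simp
    qed
    have Hs: "H - s * (1 + e) = - (2 * e * s)" unfolding H by (simp add: algebra_simps)
    show "\<sigma> * ln (4*X) + 4 * E0 + ln 17 + H + ln (1 + ln (4*X)) \<le> L"
      using sig dL2 l3 asy Hs \<open>ln 4 + ln 17 \<le> 10\<close> unfolding E0_def by linarith
  qed
  also have "exp L = X" using L Xpos by simp
  finally show ?thesis .
qed



lemma final_step:
  fixes X h T :: real
  assumes X: "X \<ge> 1" and h: "h \<ge> 2"
    and key: "real (card (smooth_range X h)) * (1 + 16 * h * (1 + ln (4*X))) \<le> X"
    and T: "X / h \<le> T" "T \<le> X"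
  shows "(1 / (h * T)) * integral {sqrt X..T} (\<lambda>t. (cmod (smooth_dirichlet_poly X h t))\<^sup>2) \<le> 1 / h"
proof (cases "T < sqrt X")
  case True
  then have "{sqrt X..T} = {}" by auto
  then show ?thesis using h by simp
next
  case False
  define N where "N = real (card (smooth_range X h))"
  define Q where "Q = 1 + ln (4*X)"
  have Q1: "Q \<ge> 1" unfolding Q_def using X by simp
  have N0: "N \<ge> 0" unfolding N_def by simp
  have sX: "sqrt X \<ge> 1" using X by simp
  have Tpos: "T > 0" using False sX by linarith
  have hT: "X \<le> h * T" using T(1) h by (simp add: field_simps)
  have I: "integral {sqrt X..T} (\<lambda>t. (cmod (smooth_dirichlet_poly X h t))\<^sup>2)
      \<le> N * ((T - sqrt X) / X + 16 * Q)"
    unfolding N_def Q_def using X False by (intro mv_bound) auto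
  also have "\<dots> \<le> N * (T / X + 16 * Q)"
    using N0 X sX by (intro mult_left_mono add_right_mono divide_right_mono) auto
  also have "\<dots> \<le> T"
  proof -
    have "N * (T / X + 16 * Q) * X = N * T + 16 * N * Q * X" using X by (simp add: field_simps)
    also have "16 * N * Q * X \<le> 16 * N * Q * (h * T)"
      using hT N0 Q1 by (intro mult_left_mono) auto
    also have "N * T + 16 * N * Q * (h * T) = T * (N * (1 + 16 * h * Q))" by (simp add: algebra_simps)
    also have "\<dots> \<le> T * X" using key Tpos unfolding N_def Q_def by (intro mult_left_mono) auto
    finally have "N * (T / X + 16 * Q) * X \<le> T * X" by simp
    then show ?thesis using X by simp
  qed
  finally have "integral {sqrt X..T} (\<lambda>t. (cmod (smooth_dirichlet_poly X h t))\<^sup>2) \<le> T" .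
  then have "(1 / (h * T)) * integral {sqrt X..T} (\<lambda>t. (cmod (smooth_dirichlet_poly X h t))\<^sup>2)
      \<le> (1 / (h * T)) * T" using h Tpos by (intro mult_left_mono) auto
  also have "\<dots> = 1 / h" using Tpos by simp
  finally show ?thesis .
qed

lemma asym_L:
  "eventually (\<lambda>L::real. L > 1 \<and> ln L > 0 \<and> ln L powr (-1/4) > 0 \<and> ln L powr (-1/4) < 1 \<and>
     (1 - ln L powr (-1/4)) * sqrt (L * ln L / 2) \<ge> 1 \<and>
     ln L / (2 * ((1 - ln L powr (-1/4)) * sqrt (L * ln L / 2))) \<le> 1/2 \<and>
     10 + 4 * (1 + 8 * (8 * sqrt L / (ln L/2) + 2 * sqrt (sqrt L) * (1 + ln (((1 - ln L powr (-1/4)) * sqrt (L * ln L / 2))/ln 2 + 1))))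
      + ln (3 + L) \<le> 2 * ln L powr (-1/4) * sqrt (L * ln L / 2)) at_top"
proof -
  have 1: "eventually (\<lambda>L::real. L > 1) at_top" by real_asymp
  have 2: "eventually (\<lambda>L::real. ln L > 0) at_top" by real_asymp
  have 3: "eventually (\<lambda>L::real. ln L powr (-1/4) > 0) at_top" by real_asymp
  have 4: "eventually (\<lambda>L::real. ln L powr (-1/4) < 1) at_top" by real_asymp
  have 5: "eventually (\<lambda>L::real. (1 - ln L powr (-1/4)) * sqrt (L * ln L / 2) \<ge> 1) at_top" by real_asymp
  have 6: "eventually (\<lambda>L::real. ln L / (2 * ((1 - ln L powr (-1/4)) * sqrt (L * ln L / 2))) \<le> 1/2) at_top" by real_asymp
  have 7: "eventually (\<lambda>L::real. 10 + 4 * (1 + 8 * (8 * sqrt L / (ln L/2) + 2 * sqrt (sqrt L) * (1 + ln (((1 - ln L powr (-1/4)) * sqrt (L * ln L / 2))/ln 2 + 1))))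
      + ln (3 + L) \<le> 2 * ln L powr (-1/4) * sqrt (L * ln L / 2)) at_top" by real_asymp
  show ?thesis using 1 2 3 4 5 6 7 by eventually_elim blast
qed

lemma eta_lim: "((\<lambda>X::real. 1/2 - (1 - ln (ln X) powr (-1/4))^2/2) \<longlongrightarrow> 0) at_top"
  by real_asymp

theorem mainTheorem7:
  "\<exists>\<eta> :: real \<Rightarrow> real. (\<eta> \<longlongrightarrow> 0) at_top \<and>
   (\<exists>C :: real. \<forall>h :: real \<Rightarrow> real.
      filterlim h at_top at_top \<longrightarrow>
      (\<forall>\<^sub>F X in at_top. h X \<le> exp (sqrt ((1/2 - \<eta> X) * ln X * ln (ln X)))) \<longrightarrow>
      (\<forall>\<^sub>F X in at_top. \<forall>T. X / h X \<le> T \<and> T \<le> X \<longrightarrow>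
          (1 / (h X * T)) * integral {sqrt X..T}
             (\<lambda>t. (cmod (smooth_dirichlet_poly X (h X) t))\<^sup>2) \<le> C / h X))"
proof (intro exI conjI allI impI)
  define \<eta> where "\<eta> = (\<lambda>X::real. 1/2 - (1 - ln (ln X) powr (-1/4))^2/2)"
  show "(\<eta> \<longlongrightarrow> 0) at_top" unfolding \<eta>_def by (rule eta_lim)
  fix h :: "real \<Rightarrow> real"
  assume hlim: "filterlim h at_top at_top"
    and hb: "\<forall>\<^sub>F X in at_top. h X \<le> exp (sqrt ((1/2 - \<eta> X) * ln X * ln (ln X)))"
  have h2: "\<forall>\<^sub>F X in at_top. h X \<ge> 2" using hlim by (simp add: filterlim_at_top)
  have asX: "\<forall>\<^sub>F X in at_top. ln X > 1 \<and> ln (ln X) > 0 \<and> ln (ln X) powr (-1/4) > 0 \<and> ln (ln X) powr (-1/4) < 1 \<and>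
     (1 - ln (ln X) powr (-1/4)) * sqrt (ln X * ln (ln X) / 2) \<ge> 1 \<and>
     ln (ln X) / (2 * ((1 - ln (ln X) powr (-1/4)) * sqrt (ln X * ln (ln X) / 2))) \<le> 1/2 \<and>
     10 + 4 * (1 + 8 * (8 * sqrt (ln X) / (ln (ln X)/2) + 2 * sqrt (sqrt (ln X)) * (1 + ln (((1 - ln (ln X) powr (-1/4)) * sqrt (ln X * ln (ln X) / 2))/ln 2 + 1))))
      + ln (3 + ln X) \<le> 2 * ln (ln X) powr (-1/4) * sqrt (ln X * ln (ln X) / 2)"
    by (rule eventually_compose_filterlim[OF asym_L ln_at_top])
  have X1: "\<forall>\<^sub>F X in at_top. X \<ge> (1::real)" by (rule eventually_ge_at_top)
  show "\<forall>\<^sub>F X in at_top. \<forall>T. X / h X \<le> T \<and> T \<le> X \<longrightarrow>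
          (1 / (h X * T)) * integral {sqrt X..T}
             (\<lambda>t. (cmod (smooth_dirichlet_poly X (h X) t))\<^sup>2) \<le> 1 / h X"
    using h2 hb asX X1
  proof eventually_elim
    case (elim X)
    define L where "L = ln X"
    define l where "l = ln L"
    define e where "e = l powr (-1/4)"
    define s where "s = sqrt (L * l / 2)"
    define H where "H = (1 - e) * s"
    define \<delta> where "\<delta> = l / (2 * H)"
    have facts: "L > 1" "l > 0" "e > 0" "e < 1" "H \<ge> 1" "\<delta> \<le> 1/2"
      using elim(3) unfolding L_def l_def e_def s_def H_def \<delta>_def by auto
    have asy: "10 + 4 * (1 + 8 * (8 * sqrt L / (l/2) + 2 * sqrt (sqrt L) * (1 + ln (H / ln 2 + 1))))
              + ln (3 + L) \<le> 2 * e * s"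
      using elim(3) unfolding L_def l_def e_def s_def H_def by auto
    have hH: "h X \<le> exp H"
    proof -
      have "(1/2 - \<eta> X) * ln X * ln (ln X) = (1 - e)^2 * (L * l / 2)"
        unfolding \<eta>_def L_def l_def e_def by (simp add: algebra_simps)
      then have "sqrt ((1/2 - \<eta> X) * ln X * ln (ln X)) = sqrt ((1 - e)^2 * (L * l / 2))"
        by (simp only:)
      also have "\<dots> = sqrt ((1 - e)^2) * s" unfolding s_def by (rule real_sqrt_mult)
      also have "sqrt ((1 - e)^2) * s = H" unfolding H_def using facts by simp
      finally show ?thesis using elim(2) by simp
    qed
    have Xpos: "X > 0" using elim(4) by simp
    have key: "real (card (smooth_range X (h X))) * (1 + 16 * h X * (1 + ln (4*X))) \<le> X"
      using Xpos facts elim(1) hH asy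
      by (intro key_ineq[where L = L and l = l and e = e and s = s and H = H and \<delta> = \<delta>])
         (auto simp: L_def l_def s_def H_def \<delta>_def)
    show ?case
    proof (intro allI impI)
      fix T assume "X / h X \<le> T \<and> T \<le> X"
      then show "(1 / (h X * T)) * integral {sqrt X..T}
             (\<lambda>t. (cmod (smooth_dirichlet_poly X (h X) t))\<^sup>2) \<le> 1 / h X"
        using elim(4) elim(1) key by (intro final_step) auto
    qed
  qed
qed


end
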